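(* Let $(f^*,g^* )$ be a stationary $\hat\alpha$-discounted Nash equilibrium of a two-player continuous time stochastic game for some $\hat\alpha>0$, with $\|\mu\|>0$, and suppose: (N1) $(f^*,g^* )$ is pure, i.e. for each $s\in S$ there are $a^1_s\in A^1(s)$, $a^2_s\in A^2(s)$ with $f^*(s,a^1_s)=1$, $g^*(s,a^2_s)=1$; (N2) $Q(f^*,g^* )=0$, i.e. every state is absorbing under $(f^*,g^* )$; (N3) for all $s\in S$, $a^1\in A^1(s)$: $r^1(s,a^1,a^2_s)\ge\sum_{s'}\left(\frac{\mu(s',s,a^1,a^2_s)}{\|\mu\|}+\delta(s,s')\right)r^1(s',a^1_{s'},a^2_{s'})$, and for all $s\in S$, $a^2\in A^2(s)$: $r^2(s,a^1_s,a^2)\ge\sum_{s'}\left(\frac{\mu(s',s,a^1_s,a^2)}{\|\mu\|}+\delta(s,s')\right)r^2(s',a^1_{s'},a^2_{s'})$. Then $(f^*,g^* )$ is a Blackwell-Nash equilibrium.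
   Context: A two-player continuous time stochastic game consists of a finite state set $S$, finite nonempty action sets $A^1(s),A^2(s)$, reward rates $r^i(s,a^1,a^2)$ ($i=1,2$), and transition rates $\mu(s',s,a^1,a^2)\ge0$ from $s$ to $s'\ne s$, with $\mu(s,s,a^1,a^2)=-\sum_{s'\ne s}\mu(s',s,a^1,a^2)$. Let $\|\mu\|=\max_{s,a^1,a^2}\sum_{s'\ne s}\mu(s',s,a^1,a^2)$ and let $\delta(s,s')$ be the Kronecker delta. Stationary strategies $f,g$ assign to each state a probability distribution on $A^1(s)$, resp. $A^2(s)$. For a stationary pair, $r^i(s,f,g)=\sum_{a^1,a^2}f(s,a^1)g(s,a^2)r^i(s,a^1,a^2)$ and $Q(f,g)$ is the generator matrix with $Q(f,g)_{ss'}=\sum_{a^1,a^2}f(s,a^1)g(s,a^2)\mu(s',s,a^1,a^2)$. For $\alpha>0$ the $\alpha$-discounted payoff is $v^i_\alpha(f,g)=(\alpha I-Q(f,g))^{-1}r^i(f,g)$ (equivalently $E^s_{f,g}\int_0^\infty e^{-\alpha t}r^i(s_t,f,g)dt$). A stationary pair $(f^*,g^* )$ is an $\alpha$-discounted Nash equilibrium if for all $s$, $v^1_\alpha(s,f^*,g^* )\ge v^1_\alpha(s,f,g^* )$ for all stationary $f$ and $v^2_\alpha(s,f^*,g^* )\ge v^2_\alpha(s,f^*,g)$ for all stationary $g$. It is a Blackwell-Nash equilibrium (BNE) if there is $\alpha_0>0$ such that it is an $\alpha$-discounted Nash equilibrium for all $\alpha\in(0,\alpha_0]$. *)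

theory Defs
  imports "HOL-Analysis.Analysis"
begin

text \<open>Two-player continuous time stochastic game. States form a finite type 's.
  A1 s, A2 s are the action sets; mu s' s a1 a2 is the transition rate from s to s'
  under (a1,a2); r1, r2 are reward rates.\<close>

definition ctsg ::
  "('s::finite \<Rightarrow> 'a set) \<Rightarrow> ('s \<Rightarrow> 'b set) \<Rightarrow> ('s \<Rightarrow> 's \<Rightarrow> 'a \<Rightarrow> 'b \<Rightarrow> real) \<Rightarrow> bool" where
  "ctsg A1 A2 mu \<longleftrightarrow>
     (\<forall>s. finite (A1 s) \<and> A1 s \<noteq> {} \<and> finite (A2 s) \<and> A2 s \<noteq> {}) \<and>
     (\<forall>s s' a1 a2. s' \<noteq> s \<longrightarrow> a1 \<in> A1 s \<longrightarrow> a2 \<in> A2 s \<longrightarrow> mu s' s a1 a2 \<ge> 0) \<and>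
     (\<forall>s a1 a2. a1 \<in> A1 s \<longrightarrow> a2 \<in> A2 s \<longrightarrow>
        mu s s a1 a2 = - (\<Sum>s'\<in>UNIV - {s}. mu s' s a1 a2))"

definition mu_norm ::
  "('s::finite \<Rightarrow> 'a set) \<Rightarrow> ('s \<Rightarrow> 'b set) \<Rightarrow> ('s \<Rightarrow> 's \<Rightarrow> 'a \<Rightarrow> 'b \<Rightarrow> real) \<Rightarrow> real" where
  "mu_norm A1 A2 mu =
     Max {(\<Sum>s'\<in>UNIV - {s}. mu s' s a1 a2) | s a1 a2. a1 \<in> A1 s \<and> a2 \<in> A2 s}"

definition stationary :: "('s \<Rightarrow> 'a set) \<Rightarrow> ('s \<Rightarrow> 'a \<Rightarrow> real) \<Rightarrow> bool" where
  "stationary A f \<longleftrightarrow> (\<forall>s. (\<forall>a\<in>A s. f s a \<ge> 0) \<and> (\<Sum>a\<in>A s. f s a) = 1)"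

definition rew ::
  "('s \<Rightarrow> 'a set) \<Rightarrow> ('s \<Rightarrow> 'b set) \<Rightarrow> ('s \<Rightarrow> 'a \<Rightarrow> 'b \<Rightarrow> real)
   \<Rightarrow> ('s \<Rightarrow> 'a \<Rightarrow> real) \<Rightarrow> ('s \<Rightarrow> 'b \<Rightarrow> real) \<Rightarrow> real ^ 's" where
  "rew A1 A2 r f g = (\<chi> s. \<Sum>a1\<in>A1 s. \<Sum>a2\<in>A2 s. f s a1 * g s a2 * r s a1 a2)"

definition genQ ::
  "('s::finite \<Rightarrow> 'a set) \<Rightarrow> ('s \<Rightarrow> 'b set) \<Rightarrow> ('s \<Rightarrow> 's \<Rightarrow> 'a \<Rightarrow> 'b \<Rightarrow> real)
   \<Rightarrow> ('s \<Rightarrow> 'a \<Rightarrow> real) \<Rightarrow> ('s \<Rightarrow> 'b \<Rightarrow> real) \<Rightarrow> real ^ 's ^ 's" where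
  "genQ A1 A2 mu f g = (\<chi> s s'. \<Sum>a1\<in>A1 s. \<Sum>a2\<in>A2 s. f s a1 * g s a2 * mu s' s a1 a2)"

definition disc_payoff ::
  "('s::finite \<Rightarrow> 'a set) \<Rightarrow> ('s \<Rightarrow> 'b set) \<Rightarrow> ('s \<Rightarrow> 's \<Rightarrow> 'a \<Rightarrow> 'b \<Rightarrow> real)
   \<Rightarrow> ('s \<Rightarrow> 'a \<Rightarrow> 'b \<Rightarrow> real) \<Rightarrow> real
   \<Rightarrow> ('s \<Rightarrow> 'a \<Rightarrow> real) \<Rightarrow> ('s \<Rightarrow> 'b \<Rightarrow> real) \<Rightarrow> real ^ 's" where
  "disc_payoff A1 A2 mu r \<alpha> f g =
     matrix_inv (\<alpha> *\<^sub>R mat 1 - genQ A1 A2 mu f g) *v rew A1 A2 r f g"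

definition disc_nash ::
  "('s::finite \<Rightarrow> 'a set) \<Rightarrow> ('s \<Rightarrow> 'b set) \<Rightarrow> ('s \<Rightarrow> 's \<Rightarrow> 'a \<Rightarrow> 'b \<Rightarrow> real)
   \<Rightarrow> ('s \<Rightarrow> 'a \<Rightarrow> 'b \<Rightarrow> real) \<Rightarrow> ('s \<Rightarrow> 'a \<Rightarrow> 'b \<Rightarrow> real) \<Rightarrow> real
   \<Rightarrow> ('s \<Rightarrow> 'a \<Rightarrow> real) \<Rightarrow> ('s \<Rightarrow> 'b \<Rightarrow> real) \<Rightarrow> bool" where
  "disc_nash A1 A2 mu r1 r2 \<alpha> fs gs \<longleftrightarrow>
     stationary A1 fs \<and> stationary A2 gs \<and>
     (\<forall>f. stationary A1 f \<longrightarrow> (\<forall>s.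
         disc_payoff A1 A2 mu r1 \<alpha> fs gs $ s \<ge> disc_payoff A1 A2 mu r1 \<alpha> f gs $ s)) \<and>
     (\<forall>g. stationary A2 g \<longrightarrow> (\<forall>s.
         disc_payoff A1 A2 mu r2 \<alpha> fs gs $ s \<ge> disc_payoff A1 A2 mu r2 \<alpha> fs g $ s))"

definition blackwell_nash ::
  "('s::finite \<Rightarrow> 'a set) \<Rightarrow> ('s \<Rightarrow> 'b set) \<Rightarrow> ('s \<Rightarrow> 's \<Rightarrow> 'a \<Rightarrow> 'b \<Rightarrow> real)
   \<Rightarrow> ('s \<Rightarrow> 'a \<Rightarrow> 'b \<Rightarrow> real) \<Rightarrow> ('s \<Rightarrow> 'a \<Rightarrow> 'b \<Rightarrow> real)
   \<Rightarrow> ('s \<Rightarrow> 'a \<Rightarrow> real) \<Rightarrow> ('s \<Rightarrow> 'b \<Rightarrow> real) \<Rightarrow> bool" where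
  "blackwell_nash A1 A2 mu r1 r2 fs gs \<longleftrightarrow>
     (\<exists>\<alpha>0>0. \<forall>\<alpha>. 0 < \<alpha> \<and> \<alpha> \<le> \<alpha>0 \<longrightarrow> disc_nash A1 A2 mu r1 r2 \<alpha> fs gs)"

end

theory Submission
  imports Defs
begin

definition Qm :: "('s::finite \<Rightarrow> 'c set) \<Rightarrow> ('s \<Rightarrow> 's \<Rightarrow> 'c \<Rightarrow> real) \<Rightarrow> ('s \<Rightarrow> 'c \<Rightarrow> real) \<Rightarrow> real^'s^'s" where
  "Qm B m h = (\<chi> s s'. \<Sum>b\<in>B s. h s b * m s' s b)"

definition Rm :: "('s::finite \<Rightarrow> 'c set) \<Rightarrow> ('s \<Rightarrow> 'c \<Rightarrow> real) \<Rightarrow> ('s \<Rightarrow> 'c \<Rightarrow> real) \<Rightarrow> real^'s" where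
  "Rm B \<rho> h = (\<chi> s. \<Sum>b\<in>B s. h s b * \<rho> s b)"

lemma Av: "((\<alpha> *\<^sub>R mat 1 - Q) *v v) $ s = \<alpha> * v$s - (\<Sum>j\<in>UNIV. Q$s$j * v$j)"
  for Q :: "real^'n::finite^'n"
proof -
  have "((\<alpha> *\<^sub>R mat 1 - Q) *v v) $ s = (\<Sum>j\<in>UNIV. (\<alpha> * (if s = j then 1 else 0) - Q$s$j) * v$j)"
    by (simp add: matrix_vector_mult_def mat_def vector_scalar_mult_def scaleR_vec_def minus_vec_def)
  also have "\<dots> = (\<Sum>j\<in>UNIV. (if s = j then \<alpha> * v$j else 0)) - (\<Sum>j\<in>UNIV. Q$s$j * v$j)"
  proof -
    have eq: "\<And>j. (\<alpha> * (if s = j then 1 else 0) - Q$s$j) * v$j = (if s = j then \<alpha> * v$j else 0) - Q$s$j * v$j"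
      by (simp add: left_diff_distrib)
    show ?thesis unfolding eq sum_subtractf by simp
  qed
  finally show ?thesis by simp
qed

lemma maxp:
  fixes Q :: "real^'n::finite^'n"
  assumes "\<alpha> > 0" "\<forall>s j. s \<noteq> j \<longrightarrow> Q$s$j \<ge> 0" "\<forall>s. (\<Sum>j\<in>UNIV. Q$s$j) = 0"
    "\<forall>s. ((\<alpha> *\<^sub>R mat 1 - Q) *v d)$s \<le> 0"
  shows "d$s \<le> 0"
proof -
  have fin: "finite ((\<lambda>j. d$j) ` UNIV)" by simp
  have "Max ((\<lambda>j. d$j) ` UNIV) \<in> (\<lambda>j. d$j) ` UNIV" using fin by (intro Max_in) auto
  then obtain s0 where s0: "d$s0 = Max ((\<lambda>j. d$j) ` UNIV)" by (metis imageE)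
  have ge: "\<forall>j. d$j \<le> d$s0" using s0 fin by simp
  have "(\<Sum>j\<in>UNIV. Q$s0$j * d$j) = (\<Sum>j\<in>UNIV. Q$s0$j * (d$j - d$s0)) + (\<Sum>j\<in>UNIV. Q$s0$j) * d$s0"
    by (simp add: right_diff_distrib sum_subtractf sum_distrib_right)
  also have "\<dots> = (\<Sum>j\<in>UNIV. Q$s0$j * (d$j - d$s0))" using assms(3) by simp
  also have "\<dots> \<le> 0"
  proof (rule sum_nonpos)
    fix j show "Q$s0$j * (d$j - d$s0) \<le> 0"
      using assms(2) ge by (cases "j = s0") (auto intro: mult_nonneg_nonpos)
  qed
  finally have "\<alpha> * d$s0 \<le> 0" using assms(4)[rule_format, of s0] Av[of \<alpha> Q d s0] by linarith
  then have "d$s0 \<le> 0" using assms(1) by (simp add: mult_le_0_iff)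
  then show ?thesis using ge by (meson order_trans)
qed

lemma inv_ok:
  fixes Q :: "real^'n::finite^'n"
  assumes "\<alpha> > 0" "\<forall>s j. s \<noteq> j \<longrightarrow> Q$s$j \<ge> 0" "\<forall>s. (\<Sum>j\<in>UNIV. Q$s$j) = 0"
  shows "(\<alpha> *\<^sub>R mat 1 - Q) *v (matrix_inv (\<alpha> *\<^sub>R mat 1 - Q) *v y) = y"
proof -
  let ?A = "\<alpha> *\<^sub>R mat 1 - Q"
  have "inj ((*v) ?A)"
  proof (rule injI)
    fix x z assume h: "?A *v x = ?A *v z"
    have "?A *v (x - z) = 0" "?A *v (z - x) = 0" using h by (simp_all add: matrix_vector_mult_diff_distrib)
    then have "\<forall>s. (x - z)$s \<le> 0" "\<forall>s. (z - x)$s \<le> 0"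
      using maxp[OF assms, of "x - z"] maxp[OF assms, of "z - x"] by auto
    then show "x = z" by (simp add: vec_eq_iff) (meson antisym)
  qed
  then have "invertible ?A" using matrix_left_invertible_injective invertible_left_inverse by blast
  then have "?A ** matrix_inv ?A = mat 1"
    unfolding invertible_def matrix_inv_def by (rule someI_ex[THEN conjunct1])
  then show ?thesis by (metis matrix_vector_mul_assoc matrix_vector_mul_lid)
qed

lemma gen_Qm:
  assumes fin: "\<forall>s. finite (B s)"
    and mnn: "\<forall>s s' b. s' \<noteq> s \<longrightarrow> b \<in> B s \<longrightarrow> m s' s b \<ge> 0"
    and mdiag: "\<forall>s b. b \<in> B s \<longrightarrow> m s s b = - (\<Sum>s'\<in>UNIV - {s}. m s' s b)"
    and st: "stationary B h"
  shows "\<forall>s j. s \<noteq> j \<longrightarrow> Qm B m h $s$j \<ge> 0" "\<forall>s. (\<Sum>j\<in>UNIV. Qm B m h $s$j) = 0"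
proof -
  show "\<forall>s j. s \<noteq> j \<longrightarrow> Qm B m h $s$j \<ge> 0"
    using st mnn unfolding Qm_def stationary_def by (auto intro!: sum_nonneg)
  show "\<forall>s. (\<Sum>j\<in>UNIV. Qm B m h $s$j) = 0"
  proof
    fix s
    have z: "(\<Sum>j\<in>UNIV. m j s b) = 0" if "b \<in> B s" for b
      using mdiag that sum.remove[of UNIV s "\<lambda>j. m j s b"] by simp
    have "(\<Sum>j\<in>UNIV. Qm B m h $s$j) = (\<Sum>b\<in>B s. h s b * (\<Sum>j\<in>UNIV. m j s b))"
      unfolding Qm_def by (simp add: sum_distrib_left sum.swap[of _ UNIV])
    also have "\<dots> = 0" using z by simp
    finally show "(\<Sum>j\<in>UNIV. Qm B m h $s$j) = 0" .
  qed
qed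

lemma mdelta: "(if P then 1 else 0) * (x::real) = (if P then x else 0)" by simp

lemma bellman_hat:
  fixes B :: "'s::finite \<Rightarrow> 'c set"
  assumes fin: "\<forall>s. finite (B s)" and bsB: "\<forall>s. bs s \<in> B s"
    and mnn: "\<forall>s s' b. s' \<noteq> s \<longrightarrow> b \<in> B s \<longrightarrow> m s' s b \<ge> 0"
    and mdiag: "\<forall>s b. b \<in> B s \<longrightarrow> m s s b = - (\<Sum>s'\<in>UNIV - {s}. m s' s b)"
    and absb: "\<forall>s s'. m s' s (bs s) = 0"
    and ubs: "\<forall>s. \<rho> s (bs s) = u s"
    and ah: "\<alpha>h > 0"
    and eqh: "\<forall>h. stationary B h \<longrightarrow> (\<forall>s. (matrix_inv (\<alpha>h *\<^sub>R mat 1 - Qm B m h) *v Rm B \<rho> h)$s \<le> u s / \<alpha>h)"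
    and b: "b \<in> B s0"
  shows "\<alpha>h * \<rho> s0 b \<le> \<alpha>h * u s0 - (\<Sum>j\<in>UNIV. m j s0 b * u j)"
proof -
  define h where "h = (\<lambda>s c. if s = s0 then (if c = b then 1 else 0) else (if c = bs s then 1 else (0::real)))"
  have st: "stationary B h" unfolding stationary_def
  proof
    fix s show "(\<forall>a\<in>B s. 0 \<le> h s a) \<and> sum (h s) (B s) = 1"
      using fin bsB b by (cases "s = s0") (auto simp: h_def)
  qed
  have Q: "Qm B m h $ s $ j = (if s = s0 then m j s0 b else 0)" for s j
    unfolding Qm_def h_def using fin bsB b absb by (cases "s = s0") (auto simp: mdelta)
  have R: "Rm B \<rho> h $ s = (if s = s0 then \<rho> s0 b else u s)" for s
    unfolding Rm_def h_def using fin bsB b ubs by (cases "s = s0") (auto simp: mdelta)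
  define v where "v = matrix_inv (\<alpha>h *\<^sub>R mat 1 - Qm B m h) *v Rm B \<rho> h"
  note g = gen_Qm[OF fin mnn mdiag st]
  have Aveq: "(\<alpha>h *\<^sub>R mat 1 - Qm B m h) *v v = Rm B \<rho> h"
    unfolding v_def by (rule inv_ok[OF ah g])
  have vo: "v$s = u s / \<alpha>h" if "s \<noteq> s0" for s
  proof -
    have "\<alpha>h * v$s = u s" using arg_cong[OF Aveq, of "\<lambda>x. x$s"] Av[of \<alpha>h "Qm B m h" v s] that
      by (simp add: Q R)
    then show ?thesis using ah by (simp add: field_simps)
  qed
  have "v$s0 \<le> u s0 / \<alpha>h" using eqh st unfolding v_def by blast
  then have v0: "\<alpha>h * v$s0 \<le> u s0" using ah by (simp add: field_simps)
  have e0: "\<alpha>h * v$s0 - (\<Sum>j\<in>UNIV. m j s0 b * v$j) = \<rho> s0 b"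
    using arg_cong[OF Aveq, of "\<lambda>x. x$s0"] Av[of \<alpha>h "Qm B m h" v s0] by (simp add: Q R)
  define S where "S = (\<Sum>j\<in>UNIV-{s0}. m j s0 b * u j)"
  have sv: "(\<Sum>j\<in>UNIV. m j s0 b * v$j) = m s0 s0 b * v$s0 + S / \<alpha>h"
    unfolding S_def using sum.remove[of UNIV s0 "\<lambda>j. m j s0 b * v$j"] vo
    by (simp add: sum_divide_distrib)
  have su: "(\<Sum>j\<in>UNIV. m j s0 b * u j) = m s0 s0 b * u s0 + S"
    unfolding S_def using sum.remove[of UNIV s0 "\<lambda>j. m j s0 b * u j"] by simp
  have "(\<Sum>s'\<in>UNIV - {s0}. m s' s0 b) \<ge> 0" using b mnn by (intro sum_nonneg) auto
  then have mneg: "m s0 s0 b \<le> 0" using mdiag b by auto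
  have "(\<alpha>h - m s0 s0 b) * (\<alpha>h * v$s0) \<le> (\<alpha>h - m s0 s0 b) * u s0"
    using v0 mneg ah by (intro mult_left_mono) auto
  moreover have "\<alpha>h * \<rho> s0 b = (\<alpha>h - m s0 s0 b) * (\<alpha>h * v$s0) - S"
  proof -
    have "\<rho> s0 b = \<alpha>h * v$s0 - m s0 s0 b * v$s0 - S / \<alpha>h" using e0 sv by linarith
    then have "\<alpha>h * \<rho> s0 b = \<alpha>h * (\<alpha>h * v$s0) - \<alpha>h * (m s0 s0 b * v$s0) - \<alpha>h * (S / \<alpha>h)"
      by (simp add: right_diff_distrib)
    then show ?thesis using ah by (simp add: algebra_simps)
  qed
  ultimately show ?thesis using su by (simp add: algebra_simps)
qed

lemma mdp_bw:
  fixes B :: "'s::finite \<Rightarrow> 'c set"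
  assumes fin: "\<forall>s. finite (B s)" and bsB: "\<forall>s. bs s \<in> B s"
    and mnn: "\<forall>s s' b. s' \<noteq> s \<longrightarrow> b \<in> B s \<longrightarrow> m s' s b \<ge> 0"
    and mdiag: "\<forall>s b. b \<in> B s \<longrightarrow> m s s b = - (\<Sum>s'\<in>UNIV - {s}. m s' s b)"
    and absb: "\<forall>s s'. m s' s (bs s) = 0"
    and ubs: "\<forall>s. \<rho> s (bs s) = u s"
    and ah: "\<alpha>h > 0" and Npos: "N > 0"
    and N3: "\<forall>s. \<forall>b\<in>B s. \<rho> s b \<ge> (\<Sum>s'\<in>UNIV. (m s' s b / N + (if s = s' then 1 else 0)) * u s')"
    and eqh: "\<forall>h. stationary B h \<longrightarrow> (\<forall>s. (matrix_inv (\<alpha>h *\<^sub>R mat 1 - Qm B m h) *v Rm B \<rho> h)$s \<le> u s / \<alpha>h)"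
    and a: "0 < \<alpha>" "\<alpha> \<le> \<alpha>h" and st: "stationary B h"
  shows "(matrix_inv (\<alpha> *\<^sub>R mat 1 - Qm B m h) *v Rm B \<rho> h)$s \<le> u s / \<alpha>"
proof -
  define M where "M s b = (\<Sum>j\<in>UNIV. m j s b * u j)" for s b
  have bell: "\<alpha> * \<rho> s b \<le> \<alpha> * u s - M s b" if b: "b \<in> B s" for s b
  proof -
    have h1: "\<alpha>h * \<rho> s b \<le> \<alpha>h * u s - M s b"
      unfolding M_def by (rule bellman_hat[OF fin bsB mnn mdiag absb ubs ah eqh b])
    have "(\<Sum>s'\<in>UNIV. (m s' s b / N + (if s = s' then 1 else 0)) * u s') = M s b / N + u s"
      unfolding M_def by (simp add: distrib_right sum.distrib sum_divide_distrib mdelta)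
    then have h2: "\<rho> s b - u s \<ge> M s b / N" using N3 b by fastforce
    have Mneg: "M s b \<le> 0"
    proof (rule ccontr)
      assume "\<not> M s b \<le> 0"
      then have "M s b / N > 0" using Npos by simp
      then have "\<rho> s b - u s > 0" using h2 by linarith
      then have "\<alpha>h * (\<rho> s b - u s) > 0" using ah by simp
      then show False using h1 \<open>\<not> M s b \<le> 0\<close> by (simp add: algebra_simps)
    qed
    show ?thesis
    proof (cases "\<rho> s b - u s \<le> 0")
      case True
      then have "\<alpha> * (\<rho> s b - u s) \<le> 0" using a by (simp add: mult_nonneg_nonpos)
      then show ?thesis using Mneg by (simp add: algebra_simps)
    next
      case False
      then have "\<alpha> * (\<rho> s b - u s) \<le> \<alpha>h * (\<rho> s b - u s)" using a by (intro mult_right_mono) auto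
      then show ?thesis using h1 by (simp add: algebra_simps)
    qed
  qed
  note g = gen_Qm[OF fin mnn mdiag st]
  define v where "v = matrix_inv (\<alpha> *\<^sub>R mat 1 - Qm B m h) *v Rm B \<rho> h"
  define w :: "real^'s" where "w = (\<chi> j. u j / \<alpha>)"
  have Aveq: "(\<alpha> *\<^sub>R mat 1 - Qm B m h) *v v = Rm B \<rho> h"
    unfolding v_def by (rule inv_ok[OF a(1) g])
  have "\<forall>s. ((\<alpha> *\<^sub>R mat 1 - Qm B m h) *v (v - w))$s \<le> 0"
  proof
    fix s
    have hs: "(\<Sum>b\<in>B s. h s b) = 1" "\<forall>b\<in>B s. h s b \<ge> 0" using st unfolding stationary_def by auto
    have "((\<alpha> *\<^sub>R mat 1 - Qm B m h) *v w)$s = \<alpha> * (u s / \<alpha>) - (\<Sum>j\<in>UNIV. Qm B m h $s$j * (u j / \<alpha>))"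
      unfolding Av w_def by simp
    also have "(\<Sum>j\<in>UNIV. Qm B m h $s$j * (u j / \<alpha>)) = (\<Sum>b\<in>B s. h s b * M s b) / \<alpha>"
      unfolding Qm_def M_def by (simp add: sum_divide_distrib sum_distrib_left sum_distrib_right sum.swap[of _ UNIV] mult_ac)
    finally have Aw: "((\<alpha> *\<^sub>R mat 1 - Qm B m h) *v w)$s = u s - (\<Sum>b\<in>B s. h s b * M s b) / \<alpha>"
      using a by simp
    have "((\<alpha> *\<^sub>R mat 1 - Qm B m h) *v (v - w))$s = Rm B \<rho> h $ s - ((\<alpha> *\<^sub>R mat 1 - Qm B m h) *v w)$s"
      using Aveq by (simp add: matrix_vector_mult_diff_distrib)
    also have "\<dots> = (\<Sum>b\<in>B s. h s b * (\<rho> s b - u s + M s b / \<alpha>))"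
      unfolding Aw Rm_def using hs(1)
      by (simp add: algebra_simps sum.distrib sum_subtractf sum_divide_distrib sum_distrib_left[symmetric] sum_distrib_right[symmetric])
    also have "\<dots> \<le> 0"
    proof (rule sum_nonpos)
      fix b assume b: "b \<in> B s"
      have "\<alpha> * (\<rho> s b - u s + M s b / \<alpha>) \<le> 0" using bell[OF b] a by (simp add: algebra_simps)
      then have "\<rho> s b - u s + M s b / \<alpha> \<le> 0" using a by (simp add: mult_le_0_iff)
      then show "h s b * (\<rho> s b - u s + M s b / \<alpha>) \<le> 0" using hs(2) b by (simp add: mult_nonneg_nonpos)
    qed
    finally show "((\<alpha> *\<^sub>R mat 1 - Qm B m h) *v (v - w))$s \<le> 0" .
  qed
  then have "(v - w)$s \<le> 0" by (rule maxp[OF a(1) g])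
  then show ?thesis unfolding v_def[symmetric] by (simp add: w_def)
qed

lemma pure_zero:
  assumes "finite A" "a \<in> A" "f a = 1" "\<forall>x\<in>A. f x \<ge> (0::real)" "sum f A = 1"
  shows "\<forall>x\<in>A. x \<noteq> a \<longrightarrow> f x = 0"
proof -
  have "sum f (A - {a}) = 0" using sum.remove[OF assms(1,2), of f] assms(3,5) by simp
  then show ?thesis using assms(1,4) sum_nonneg_eq_0_iff[of "A - {a}" f] by auto
qed

lemma pure_sum:
  assumes "finite A" "a \<in> A" "f a = 1" "\<forall>x\<in>A. f x \<ge> (0::real)" "sum f A = 1"
  shows "(\<Sum>x\<in>A. f x * c x) = c a"
proof -
  have z: "\<forall>x\<in>A. x \<noteq> a \<longrightarrow> f x = 0" by (rule pure_zero[OF assms])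
  have "(\<Sum>x\<in>A. f x * c x) = f a * c a + (\<Sum>x\<in>A - {a}. f x * c x)"
    using sum.remove[OF assms(1,2)] by blast
  also have "(\<Sum>x\<in>A - {a}. f x * c x) = 0" using z by (intro sum.neutral) auto
  finally show ?thesis using assms(3) by simp
qed

theorem theorem6:
  fixes A1 :: "'s::finite \<Rightarrow> 'a set" and A2 :: "'s \<Rightarrow> 'b set"
    and mu :: "'s \<Rightarrow> 's \<Rightarrow> 'a \<Rightarrow> 'b \<Rightarrow> real"
    and r1 r2 :: "'s \<Rightarrow> 'a \<Rightarrow> 'b \<Rightarrow> real"
    and fs :: "'s \<Rightarrow> 'a \<Rightarrow> real" and gs :: "'s \<Rightarrow> 'b \<Rightarrow> real"
    and a1s :: "'s \<Rightarrow> 'a" and a2s :: "'s \<Rightarrow> 'b"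
    and \<alpha>h :: real
  assumes game: "ctsg A1 A2 mu"
    and alpha_pos: "\<alpha>h > 0"
    and eq: "disc_nash A1 A2 mu r1 r2 \<alpha>h fs gs"
    and norm_pos: "mu_norm A1 A2 mu > 0"
    and N1: "\<forall>s. a1s s \<in> A1 s \<and> a2s s \<in> A2 s \<and> fs s (a1s s) = 1 \<and> gs s (a2s s) = 1"
    and N2: "genQ A1 A2 mu fs gs = 0"
    and N3a: "\<forall>s. \<forall>a1\<in>A1 s. r1 s a1 (a2s s) \<ge>
               (\<Sum>s'\<in>UNIV. (mu s' s a1 (a2s s) / mu_norm A1 A2 mu + (if s = s' then 1 else 0))
                             * r1 s' (a1s s') (a2s s'))"
    and N3b: "\<forall>s. \<forall>a2\<in>A2 s. r2 s (a1s s) a2 \<ge>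
               (\<Sum>s'\<in>UNIV. (mu s' s (a1s s) a2 / mu_norm A1 A2 mu + (if s = s' then 1 else 0))
                             * r2 s' (a1s s') (a2s s'))"
  shows "blackwell_nash A1 A2 mu r1 r2 fs gs"
proof -
  have fin1: "\<forall>s. finite (A1 s)" and fin2: "\<forall>s. finite (A2 s)"
    and mnn0: "\<forall>s s' a1 a2. s' \<noteq> s \<longrightarrow> a1 \<in> A1 s \<longrightarrow> a2 \<in> A2 s \<longrightarrow> mu s' s a1 a2 \<ge> 0"
    and mdg0: "\<forall>s a1 a2. a1 \<in> A1 s \<longrightarrow> a2 \<in> A2 s \<longrightarrow> mu s s a1 a2 = - (\<Sum>s'\<in>UNIV - {s}. mu s' s a1 a2)"
    using game unfolding ctsg_def by auto
  have stf: "stationary A1 fs" and stg: "stationary A2 gs" using eq unfolding disc_nash_def by auto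
  have pf: "(\<Sum>x\<in>A1 s. fs s x * c x) = c (a1s s)" for s c
    using stf N1 fin1 unfolding stationary_def by (intro pure_sum) auto
  have pg: "(\<Sum>x\<in>A2 s. gs s x * c x) = c (a2s s)" for s c
    using stg N1 fin2 unfolding stationary_def by (intro pure_sum) auto
  have Q1: "genQ A1 A2 mu f gs = Qm A1 (\<lambda>s' s a. mu s' s a (a2s s)) f" for f
  proof -
    have "(\<Sum>a2\<in>A2 s. f s a1 * gs s a2 * mu s' s a1 a2) = f s a1 * mu s' s a1 (a2s s)" for s s' a1
      using pg[of s "\<lambda>a2. f s a1 * mu s' s a1 a2"] by (simp add: mult_ac)
    then show ?thesis unfolding genQ_def Qm_def by simp
  qed
  have R1: "rew A1 A2 r f gs = Rm A1 (\<lambda>s a. r s a (a2s s)) f" for f r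
  proof -
    have "(\<Sum>a2\<in>A2 s. f s a1 * gs s a2 * r s a1 a2) = f s a1 * r s a1 (a2s s)" for s a1
      using pg[of s "\<lambda>a2. f s a1 * r s a1 a2"] by (simp add: mult_ac)
    then show ?thesis unfolding rew_def Rm_def by simp
  qed
  have Q2: "genQ A1 A2 mu fs g = Qm A2 (\<lambda>s' s b. mu s' s (a1s s) b) g" for g
  proof -
    have "(\<Sum>a1\<in>A1 s. \<Sum>a2\<in>A2 s. fs s a1 * g s a2 * mu s' s a1 a2) = (\<Sum>a2\<in>A2 s. g s a2 * mu s' s (a1s s) a2)" for s s'
      using pf[of s "\<lambda>a1. \<Sum>a2\<in>A2 s. g s a2 * mu s' s a1 a2"] by (simp add: sum_distrib_left mult_ac)
    then show ?thesis unfolding genQ_def Qm_def by simp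
  qed
  have R2: "rew A1 A2 r fs g = Rm A2 (\<lambda>s b. r s (a1s s) b) g" for g r
  proof -
    have "(\<Sum>a1\<in>A1 s. \<Sum>a2\<in>A2 s. fs s a1 * g s a2 * r s a1 a2) = (\<Sum>a2\<in>A2 s. g s a2 * r s (a1s s) a2)" for s
      using pf[of s "\<lambda>a1. \<Sum>a2\<in>A2 s. g s a2 * r s a1 a2"] by (simp add: sum_distrib_left mult_ac)
    then show ?thesis unfolding rew_def Rm_def by simp
  qed
  have absb: "\<forall>s s'. mu s' s (a1s s) (a2s s) = 0"
  proof (intro allI)
    fix s s'
    have "genQ A1 A2 mu fs gs $ s $ s' = 0" using N2 by simp
    then show "mu s' s (a1s s) (a2s s) = 0" unfolding Q1 Qm_def using pf[of s "\<lambda>a. mu s' s a (a2s s)"] by simp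
  qed
  have rewp: "rew A1 A2 r fs gs $ s = r s (a1s s) (a2s s)" for r s
    unfolding R1 Rm_def using pf[of s "\<lambda>a. r s a (a2s s)"] by simp
  have val: "disc_payoff A1 A2 mu r \<alpha> fs gs $ s = r s (a1s s) (a2s s) / \<alpha>" if "\<alpha> > 0" for r \<alpha> s
  proof -
    have e: "(\<alpha> *\<^sub>R mat 1 - (0::real^'s^'s)) *v (matrix_inv (\<alpha> *\<^sub>R mat 1 - 0) *v rew A1 A2 r fs gs) = rew A1 A2 r fs gs"
      by (rule inv_ok[OF that]) auto
    have "\<alpha> * (disc_payoff A1 A2 mu r \<alpha> fs gs $ s) = r s (a1s s) (a2s s)"
      using arg_cong[OF e, of "\<lambda>x. x$s"] Av[of \<alpha> "0::real^'s^'s" _ s] rewp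
      unfolding disc_payoff_def N2 by simp
    then show ?thesis using that by (simp add: field_simps)
  qed
  show ?thesis unfolding blackwell_nash_def
  proof (intro exI[of _ \<alpha>h] conjI allI impI)
    show "\<alpha>h > 0" by (rule alpha_pos)
    fix \<alpha> assume a: "0 < \<alpha> \<and> \<alpha> \<le> \<alpha>h"
    show "disc_nash A1 A2 mu r1 r2 \<alpha> fs gs"
      unfolding disc_nash_def
    proof (intro conjI allI impI stf stg)
      fix f s assume st: "stationary A1 f"
      have "(matrix_inv (\<alpha> *\<^sub>R mat 1 - Qm A1 (\<lambda>s' s a. mu s' s a (a2s s)) f) *v Rm A1 (\<lambda>s a. r1 s a (a2s s)) f)$s
            \<le> r1 s (a1s s) (a2s s) / \<alpha>"
      proof (rule mdp_bw[where bs = a1s and \<alpha>h = \<alpha>h and N = "mu_norm A1 A2 mu"])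
        show "\<forall>s. finite (A1 s)" by (rule fin1)
        show "\<forall>s. a1s s \<in> A1 s" using N1 by auto
        show "\<forall>s s' b. s' \<noteq> s \<longrightarrow> b \<in> A1 s \<longrightarrow> mu s' s b (a2s s) \<ge> 0" using mnn0 N1 by auto
        show "\<forall>s b. b \<in> A1 s \<longrightarrow> mu s s b (a2s s) = - (\<Sum>s'\<in>UNIV - {s}. mu s' s b (a2s s))" using mdg0 N1 by auto
        show "\<forall>s s'. mu s' s (a1s s) (a2s s) = 0" by (rule absb)
        show "\<forall>s. r1 s (a1s s) (a2s s) = r1 s (a1s s) (a2s s)" by simp
        show "\<alpha>h > 0" "mu_norm A1 A2 mu > 0" by (rule alpha_pos, rule norm_pos)
        show "\<forall>s. \<forall>b\<in>A1 s. r1 s b (a2s s) \<ge> (\<Sum>s'\<in>UNIV. (mu s' s b (a2s s) / mu_norm A1 A2 mu + (if s = s' then 1 else 0)) * r1 s' (a1s s') (a2s s'))"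
          by (rule N3a)
        show "\<forall>h. stationary A1 h \<longrightarrow> (\<forall>s. (matrix_inv (\<alpha>h *\<^sub>R mat 1 - Qm A1 (\<lambda>s' s a. mu s' s a (a2s s)) h) *v Rm A1 (\<lambda>s a. r1 s a (a2s s)) h)$s \<le> r1 s (a1s s) (a2s s) / \<alpha>h)"
        proof (intro allI impI)
          fix h s assume sth: "stationary A1 h"
          have "disc_payoff A1 A2 mu r1 \<alpha>h h gs $ s \<le> disc_payoff A1 A2 mu r1 \<alpha>h fs gs $ s"
            using eq sth unfolding disc_nash_def by blast
          then show "(matrix_inv (\<alpha>h *\<^sub>R mat 1 - Qm A1 (\<lambda>s' s a. mu s' s a (a2s s)) h) *v Rm A1 (\<lambda>s a. r1 s a (a2s s)) h)$s \<le> r1 s (a1s s) (a2s s) / \<alpha>h"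
            unfolding val[OF alpha_pos] by (simp only: disc_payoff_def Q1 R1)
        qed
      qed (use a st in auto)
      then show "disc_payoff A1 A2 mu r1 \<alpha> fs gs $ s \<ge> disc_payoff A1 A2 mu r1 \<alpha> f gs $ s"
        unfolding val[of \<alpha> r1 s, OF conjunct1[OF a]] by (simp only: disc_payoff_def Q1 R1)
    next
      fix g s assume st: "stationary A2 g"
      have "(matrix_inv (\<alpha> *\<^sub>R mat 1 - Qm A2 (\<lambda>s' s b. mu s' s (a1s s) b) g) *v Rm A2 (\<lambda>s b. r2 s (a1s s) b) g)$s
            \<le> r2 s (a1s s) (a2s s) / \<alpha>"
      proof (rule mdp_bw[where bs = a2s and \<alpha>h = \<alpha>h and N = "mu_norm A1 A2 mu"])
        show "\<forall>s. finite (A2 s)" by (rule fin2)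
        show "\<forall>s. a2s s \<in> A2 s" using N1 by auto
        show "\<forall>s s' b. s' \<noteq> s \<longrightarrow> b \<in> A2 s \<longrightarrow> mu s' s (a1s s) b \<ge> 0" using mnn0 N1 by auto
        show "\<forall>s b. b \<in> A2 s \<longrightarrow> mu s s (a1s s) b = - (\<Sum>s'\<in>UNIV - {s}. mu s' s (a1s s) b)" using mdg0 N1 by auto
        show "\<forall>s s'. mu s' s (a1s s) (a2s s) = 0" by (rule absb)
        show "\<forall>s. r2 s (a1s s) (a2s s) = r2 s (a1s s) (a2s s)" by simp
        show "\<alpha>h > 0" "mu_norm A1 A2 mu > 0" by (rule alpha_pos, rule norm_pos)
        show "\<forall>s. \<forall>b\<in>A2 s. r2 s (a1s s) b \<ge> (\<Sum>s'\<in>UNIV. (mu s' s (a1s s) b / mu_norm A1 A2 mu + (if s = s' then 1 else 0)) * r2 s' (a1s s') (a2s s'))"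
          by (rule N3b)
        show "\<forall>h. stationary A2 h \<longrightarrow> (\<forall>s. (matrix_inv (\<alpha>h *\<^sub>R mat 1 - Qm A2 (\<lambda>s' s b. mu s' s (a1s s) b) h) *v Rm A2 (\<lambda>s b. r2 s (a1s s) b) h)$s \<le> r2 s (a1s s) (a2s s) / \<alpha>h)"
        proof (intro allI impI)
          fix h s assume sth: "stationary A2 h"
          have "disc_payoff A1 A2 mu r2 \<alpha>h fs h $ s \<le> disc_payoff A1 A2 mu r2 \<alpha>h fs gs $ s"
            using eq sth unfolding disc_nash_def by blast
          then show "(matrix_inv (\<alpha>h *\<^sub>R mat 1 - Qm A2 (\<lambda>s' s b. mu s' s (a1s s) b) h) *v Rm A2 (\<lambda>s b. r2 s (a1s s) b) h)$s \<le> r2 s (a1s s) (a2s s) / \<alpha>h"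
            unfolding val[OF alpha_pos] by (simp only: disc_payoff_def Q2 R2)
        qed
      qed (use a st in auto)
      then show "disc_payoff A1 A2 mu r2 \<alpha> fs gs $ s \<ge> disc_payoff A1 A2 mu r2 \<alpha> fs g $ s"
        unfolding val[of \<alpha> r2 s, OF conjunct1[OF a]] by (simp only: disc_payoff_def Q2 R2)
    qed
  qed
qed

end
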